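(* Let $n\ge 1$ and let $\boldsymbol{\gamma}^{[k]}=(\boldsymbol{\alpha}^{[k]},\boldsymbol{\beta}^{[k]})\in\mathscr{W}$, $k\ge 0$, be corner cutting weights such that $\sup_{k\ge 0}\mu(\boldsymbol{\gamma}^{[k]})<1$. Let $\mathbf{P}^{[0]}=\{P^{[0]}_i\in\mathbb{R}^n,\ i\in\mathbb{Z}\}$ be an initial sequence of points for which there is $L>0$ with $\|P^{[0]}_{i+1}-P^{[0]}_i\|_\infty<L$ for all $i\in\mathbb{Z}$, and let $\mathbf{P}^{[k+1]}=CC_{\boldsymbol{\gamma}^{[k]}}(\mathbf{P}^{[k]})$ for $k\ge 0$. Then the corner cutting algorithm converges for $\mathbf{P}^{[0]}$: there exists a continuous function $F:\mathbb{R}\to\mathbb{R}^n$ such that $$\lim_{k\to+\infty}\sup_{i\in\mathbb{Z}}\|F(2^{-k}i)-P^{[k]}_i\|_\infty=0.$$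
   Context: $\mathscr{W}$ is the set of pairs $(\boldsymbol{\alpha},\boldsymbol{\beta})$ of real bi-infinite sequences $\boldsymbol{\alpha}=(\alpha_i)_{i\in\mathbb{Z}}$, $\boldsymbol{\beta}=(\beta_i)_{i\in\mathbb{Z}}$ such that $\inf_{i\in\mathbb{Z}}\min\{\alpha_i,\,1-\beta_i,\,\beta_i-\alpha_i\}>0$. For $\boldsymbol{\gamma}=(\boldsymbol{\alpha},\boldsymbol{\beta})\in\mathscr{W}$, $\mu(\boldsymbol{\gamma}):=\sup_{i\in\mathbb{Z}}\max\{\beta_i-\alpha_i,\ 1-\beta_{i-1}+\alpha_i\}$. The corner cutting operator $CC_{\boldsymbol{\gamma}}$ maps a sequence $\mathbf{P}=(P_i)_{i\in\mathbb{Z}}$ of points of $\mathbb{R}^n$ to the sequence given by $(CC_{\boldsymbol{\gamma}}(\mathbf{P}))_{2i}=(1-\alpha_i)P_i+\alpha_iP_{i+1}$ and $(CC_{\boldsymbol{\gamma}}(\mathbf{P}))_{2i+1}=(1-\beta_i)P_i+\beta_iP_{i+1}$, $i\in\mathbb{Z}$. *)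

theory Defs
  imports "HOL-Analysis.Analysis"
begin

definition cc_weights :: "(int \<Rightarrow> real) \<Rightarrow> (int \<Rightarrow> real) \<Rightarrow> bool" where
  "cc_weights \<alpha> \<beta> \<longleftrightarrow>
     (INF i. min (\<alpha> i) (min (1 - \<beta> i) (\<beta> i - \<alpha> i))) > 0
     \<and> bdd_below (range (\<lambda>i. min (\<alpha> i) (min (1 - \<beta> i) (\<beta> i - \<alpha> i))))"

definition cc_mu :: "(int \<Rightarrow> real) \<Rightarrow> (int \<Rightarrow> real) \<Rightarrow> real" where
  "cc_mu \<alpha> \<beta> = (SUP i. max (\<beta> i - \<alpha> i) (1 - \<beta> (i - 1) + \<alpha> i))"

definition CC :: "(int \<Rightarrow> real) \<Rightarrow> (int \<Rightarrow> real) \<Rightarrow> (int \<Rightarrow> 'a::real_vector) \<Rightarrow> int \<Rightarrow> 'a" where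
  "CC \<alpha> \<beta> P j =
     (if even j then (1 - \<alpha> (j div 2)) *\<^sub>R P (j div 2) + \<alpha> (j div 2) *\<^sub>R P (j div 2 + 1)
      else (1 - \<beta> (j div 2)) *\<^sub>R P (j div 2) + \<beta> (j div 2) *\<^sub>R P (j div 2 + 1))"

end

theory Submission
  imports Defs
begin

definition pl :: "(int \<Rightarrow> 'a::real_normed_vector) \<Rightarrow> real \<Rightarrow> 'a" where
  "pl a t = (1 - (t - of_int \<lfloor>t\<rfloor>)) *\<^sub>R a \<lfloor>t\<rfloor> + (t - of_int \<lfloor>t\<rfloor>) *\<^sub>R a (\<lfloor>t\<rfloor> + 1)"

lemma pl_int[simp]: "pl a (of_int i) = a i"
  by (simp add: pl_def)

lemma pl_cont: "continuous_on UNIV (pl a)"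
proof -
  define g :: "int \<Rightarrow> real \<Rightarrow> _" where "g m y = (1 - (y - of_int m)) *\<^sub>R a m + (y - of_int m) *\<^sub>R a (m+1)" for m y
  have gc: "isCont (g m) y" for m y unfolding g_def by (intro continuous_intros)
  have gl: "(g m \<longlongrightarrow> g m y) (at y within S)" for m y and S :: "real set"
    using gc[where m=m and y=y] by (metis continuous_at tendsto_mono at_le subset_UNIV)
  have "isCont (pl a) t" for t
  proof -
    have r: "continuous (at_right t) (pl a)"
    proof -
      have ev: "eventually (\<lambda>y. g \<lfloor>t\<rfloor> y = pl a y) (at_right t)"
      proof -
        have "eventually (\<lambda>y. y \<in> {t<..<of_int \<lfloor>t\<rfloor> + 1}) (at_right t)"
          by (rule eventually_at_right_real) (rule real_of_int_floor_add_one_gt)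
        then show ?thesis
        proof (rule eventually_mono)
          fix y assume y: "y \<in> {t<..<of_int \<lfloor>t\<rfloor> + 1}"
          then have "\<lfloor>y\<rfloor> = \<lfloor>t\<rfloor>" by (auto simp: floor_eq_iff) linarith
          then show "g \<lfloor>t\<rfloor> y = pl a y" by (simp add: pl_def g_def)
        qed
      qed
      have "pl a t = g \<lfloor>t\<rfloor> t" by (simp add: pl_def g_def)
      then show ?thesis unfolding continuous_within
        using Lim_transform_eventually[OF gl ev] by simp
    qed
    have l: "continuous (at_left t) (pl a)"
    proof -
      define m where "m = \<lceil>t\<rceil> - 1"
      have mt: "of_int m < t" "t \<le> of_int m + 1" using ceiling_correct[of t] by (auto simp: m_def)
      have ev: "eventually (\<lambda>y. g m y = pl a y) (at_left t)"
      proof -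
        have "eventually (\<lambda>y. y \<in> {of_int m<..<t}) (at_left t)"
          by (rule eventually_at_left_real) (rule mt)
        then show ?thesis
        proof (rule eventually_mono)
          fix y assume y: "y \<in> {of_int m<..<t}"
          then have "\<lfloor>y\<rfloor> = m" using mt by (auto simp: floor_eq_iff)
          then show "g m y = pl a y" by (simp add: pl_def g_def)
        qed
      qed
      have "pl a t = g m t"
      proof (cases "t = of_int m + 1")
        case True
        then have "t = of_int (m+1)" by simp
        then show ?thesis by (simp only: pl_int) (simp add: g_def)
      next
        case False
        then have "\<lfloor>t\<rfloor> = m" using mt by (auto simp: floor_eq_iff)
        then show ?thesis by (simp add: pl_def g_def)
      qed
      then show ?thesis unfolding continuous_within
        using Lim_transform_eventually[OF gl ev] by simp
    qed
    show ?thesis using l r continuous_at_split by blast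
  qed
  then show ?thesis by (simp add: continuous_at_imp_continuous_on)
qed

lemma pl_near:
  assumes "\<And>i. norm (a (i+1) - a i) \<le> D"
  shows "norm (pl a t - a \<lfloor>t\<rfloor>) \<le> D"
proof -
  define s where "s = t - of_int \<lfloor>t\<rfloor>"
  have s: "0 \<le> s" "s \<le> 1" unfolding s_def by linarith+
  have "pl a t - a \<lfloor>t\<rfloor> = s *\<^sub>R (a (\<lfloor>t\<rfloor>+1) - a \<lfloor>t\<rfloor>)"
    by (simp add: pl_def s_def[symmetric] algebra_simps)
  also have "norm \<dots> = s * norm (a (\<lfloor>t\<rfloor>+1) - a \<lfloor>t\<rfloor>)" using s by simp
  also have "\<dots> \<le> 1 * D" using s assms[of "\<lfloor>t\<rfloor>"]
    by (intro mult_mono) (auto intro: order_trans[OF norm_ge_zero])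
  finally show ?thesis by simp
qed

lemma pl_step:
  assumes da: "\<And>i. norm (a (i+1) - a i) \<le> D"
    and db: "\<And>i. norm (b (i+1) - b i) \<le> D'"
    and b2: "\<And>i. b (2*i) = (1 - c i) *\<^sub>R a i + c i *\<^sub>R a (i+1)"
    and c: "\<And>i. 0 \<le> c i \<and> c i \<le> 1"
  shows "norm (pl b (2*t) - pl a t) \<le> 2*D + 2*D'"
proof -
  define i where "i = \<lfloor>t\<rfloor>"
  have j: "\<lfloor>2*t\<rfloor> = 2*i \<or> \<lfloor>2*t\<rfloor> = 2*i+1" unfolding i_def by (auto simp: floor_eq_iff) linarith
  have D0: "0 \<le> D" using da[of 0] norm_ge_zero order_trans by blast
  have 1: "norm (pl b (2*t) - b \<lfloor>2*t\<rfloor>) \<le> D'" by (rule pl_near) (rule db)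
  have 2: "norm (b \<lfloor>2*t\<rfloor> - b (2*i)) \<le> D'" using j db[of "2*i"] D0
    by (auto simp: norm_minus_commute intro: order_trans[OF norm_ge_zero])
  have "b (2*i) - a i = c i *\<^sub>R (a (i+1) - a i)" unfolding b2 by (simp add: algebra_simps)
  then have "norm (b (2*i) - a i) = c i * norm (a (i+1) - a i)" using c[of i] by simp
  also have "\<dots> \<le> 1 * D" using c[of i] da[of i] by (intro mult_mono) auto
  finally have 3: "norm (b (2*i) - a i) \<le> D" by simp
  have 4: "norm (a i - pl a t) \<le> D" using pl_near[of a D t] da by (simp add: i_def norm_minus_commute)
  have "pl b (2*t) - pl a t = (pl b (2*t) - b \<lfloor>2*t\<rfloor>) + (b \<lfloor>2*t\<rfloor> - b (2*i)) + (b (2*i) - a i) + (a i - pl a t)"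
    by simp
  also have "norm \<dots> \<le> D' + D' + D + D"
    using 1 2 3 4 by (meson add_mono norm_triangle_le order_trans)
  finally show ?thesis by simp
qed


lemma cc_diff_even:
  "CC a b P (2*m+1) - CC a b P (2*m) = (b m - a m) *\<^sub>R (P (m+1) - P m)"
  by (simp add: CC_def algebra_simps)

lemma cc_diff_odd:
  "CC a b P (2*m+1+1) - CC a b P (2*m+1) = (1 - b m) *\<^sub>R (P (m+1) - P m) + a (m+1) *\<^sub>R (P (m+1+1) - P (m+1))"
proof -
  have e: "(2*m+1+1) div 2 = m+1" "even (2*m+1+1)" by presburger+
  show ?thesis by (simp add: CC_def e algebra_simps)
qed

theorem theorem1:
  fixes \<alpha> \<beta> :: "nat \<Rightarrow> int \<Rightarrow> real"
    and P :: "nat \<Rightarrow> int \<Rightarrow> real ^ 'n"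
  assumes W: "\<And>k. cc_weights (\<alpha> k) (\<beta> k)"
    and mu: "(SUP k. cc_mu (\<alpha> k) (\<beta> k)) < 1"
    and init: "\<exists>L>0. \<forall>i. infnorm (P 0 (i + 1) - P 0 i) < L"
    and step: "\<And>k. P (Suc k) = CC (\<alpha> k) (\<beta> k) (P k)"
  shows "\<exists>F :: real \<Rightarrow> real ^ 'n. continuous_on UNIV F \<and>
           (\<lambda>k. SUP i. ereal (infnorm (F (real_of_int i / 2 ^ k) - P k i))) \<longlonglongrightarrow> 0"
proof -
  obtain L0 where L0: "L0 > 0" "\<And>i. infnorm (P 0 (i + 1) - P 0 i) < L0" using init by blast
  define L where "L = sqrt DIM(real^'n) * L0"
  have L: "L \<ge> 0" using L0 by (simp add: L_def)
  have ab: "0 < \<alpha> k i \<and> \<alpha> k i < \<beta> k i \<and> \<beta> k i < 1" for k i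
  proof -
    have "(INF i. min (\<alpha> k i) (min (1 - \<beta> k i) (\<beta> k i - \<alpha> k i))) \<le> min (\<alpha> k i) (min (1 - \<beta> k i) (\<beta> k i - \<alpha> k i))"
      using W[of k] unfolding cc_weights_def by (intro cINF_lower) auto
    then show ?thesis using W[of k] unfolding cc_weights_def by linarith
  qed
  have bdd: "bdd_above (range (\<lambda>i. max (\<beta> k i - \<alpha> k i) (1 - \<beta> k (i - 1) + \<alpha> k i)))" for k
  proof (rule bdd_aboveI2)
    fix i show "max (\<beta> k i - \<alpha> k i) (1 - \<beta> k (i - 1) + \<alpha> k i) \<le> 2"
      using ab[of k i] ab[of k "i-1"] by auto
  qed
  have up: "max (\<beta> k i - \<alpha> k i) (1 - \<beta> k (i - 1) + \<alpha> k i) \<le> cc_mu (\<alpha> k) (\<beta> k)" for k i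
    unfolding cc_mu_def by (rule cSUP_upper[OF _ bdd]) auto
  have mu2: "cc_mu (\<alpha> k) (\<beta> k) \<le> 2" for k
    unfolding cc_mu_def
  proof (rule cSUP_least)
    fix i show "max (\<beta> k i - \<alpha> k i) (1 - \<beta> k (i - 1) + \<alpha> k i) \<le> 2"
      using ab[of k i] ab[of k "i-1"] by auto
  qed auto
  define \<mu> where "\<mu> = (SUP k. cc_mu (\<alpha> k) (\<beta> k))"
  have cmu: "cc_mu (\<alpha> k) (\<beta> k) \<le> \<mu>" for k
    unfolding \<mu>_def by (rule cSUP_upper) (auto intro: bdd_aboveI2[OF mu2])
  have mu1: "\<mu> < 1" using mu by (simp add: \<mu>_def)
  have mu0: "0 \<le> \<mu>" using cmu[of 0] up[of 0 0] ab[of 0 0] by linarith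
  have D: "norm (P k (i+1) - P k i) \<le> L * \<mu>^k" for k i
  proof (induction k arbitrary: i)
    case 0
    have "norm (P 0 (i+1) - P 0 i) \<le> sqrt DIM(real^'n) * infnorm (P 0 (i+1) - P 0 i)"
      by (rule norm_le_infnorm)
    also have "\<dots> \<le> L" unfolding L_def using L0(2)[of i] by (intro mult_left_mono) auto
    finally show ?case by simp
  next
    case (Suc k)
    show ?case
    proof (cases "even i")
      case True
      then obtain m where m: "i = 2*m" by (auto elim: evenE)
      have "P (Suc k) (i+1) - P (Suc k) i = (\<beta> k m - \<alpha> k m) *\<^sub>R (P k (m+1) - P k m)"
        unfolding step m by (rule cc_diff_even)
      then have "norm (P (Suc k) (i+1) - P (Suc k) i) = (\<beta> k m - \<alpha> k m) * norm (P k (m+1) - P k m)"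
        using ab[of k m] by simp
      also have "\<dots> \<le> \<mu> * (L * \<mu>^k)"
        using up[of k m] cmu[of k] ab[of k m] Suc[of m] by (intro mult_mono) auto
      finally show ?thesis by (simp add: algebra_simps)
    next
      case False
      then obtain m where m: "i = 2*m+1" by (auto elim: oddE)
      have "P (Suc k) (i+1) - P (Suc k) i = (1 - \<beta> k m) *\<^sub>R (P k (m+1) - P k m) + \<alpha> k (m+1) *\<^sub>R (P k (m+1+1) - P k (m+1))"
        unfolding step m by (rule cc_diff_odd)
      then have "norm (P (Suc k) (i+1) - P (Suc k) i) \<le> (1 - \<beta> k m) * norm (P k (m+1) - P k m) + \<alpha> k (m+1) * norm (P k (m+1+1) - P k (m+1))"
        using ab[of k m] ab[of k "m+1"] by (metis norm_triangle_ineq norm_scaleR abs_of_nonneg less_imp_le diff_ge_0_iff_ge)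
      also have "\<dots> \<le> (1 - \<beta> k m) * (L * \<mu>^k) + \<alpha> k (m+1) * (L * \<mu>^k)"
        using ab[of k m] ab[of k "m+1"] Suc[of m] Suc[of "m+1"] by (intro add_mono mult_left_mono) auto
      also have "\<dots> = (1 - \<beta> k (m+1-1) + \<alpha> k (m+1)) * (L * \<mu>^k)" by (simp add: algebra_simps)
      also have "\<dots> \<le> \<mu> * (L * \<mu>^k)"
        using up[of k "m+1"] cmu[of k] L mu0 by (intro mult_right_mono) auto
      finally show ?thesis by (simp add: algebra_simps)
    qed
  qed
  define f where "f k x = pl (P k) (2^k * x)" for k x
  have fc: "continuous_on UNIV (f k)" for k
  proof -
    have "continuous_on UNIV (pl (P k) \<circ> (\<lambda>x. 2^k * x))"
      by (rule continuous_on_compose) (auto intro: continuous_intros continuous_on_subset[OF pl_cont])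
    then show ?thesis by (simp add: f_def o_def)
  qed
  define g where "g k x = f (Suc k) x - f k x" for k x
  define M where "M k = 4 * L * \<mu>^k" for k
  have gb: "norm (g k x) \<le> M k" for k x
  proof -
    have "norm (pl (P (Suc k)) (2 * (2^k * x)) - pl (P k) (2^k*x)) \<le> 2 * (L*\<mu>^k) + 2 * (L*\<mu>^Suc k)"
    proof (rule pl_step)
      show "norm (P k (i+1) - P k i) \<le> L*\<mu>^k" for i by (rule D)
      show "norm (P (Suc k) (i+1) - P (Suc k) i) \<le> L*\<mu>^Suc k" for i by (rule D)
      show "P (Suc k) (2*i) = (1 - \<alpha> k i) *\<^sub>R P k i + \<alpha> k i *\<^sub>R P k (i+1)" for i
        by (simp add: step CC_def)
      show "0 \<le> \<alpha> k i \<and> \<alpha> k i \<le> 1" for i using ab[of k i] by auto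
    qed
    also have "\<dots> \<le> M k"
    proof -
      have "\<mu>^Suc k \<le> \<mu>^k" using mu0 mu1 by (simp add: mult_left_le_one_le)
      then have "L * \<mu>^Suc k \<le> L * \<mu>^k" using L by (rule mult_left_mono)
      then show ?thesis unfolding M_def by simp
    qed
    finally show ?thesis by (simp add: g_def f_def mult.assoc)
  qed
  have sM: "summable M" unfolding M_def
    by (intro summable_mult summable_geometric) (use mu0 mu1 in auto)
  have sg: "summable (\<lambda>k. g k x)" for x
    by (rule summable_comparison_test[OF _ sM]) (use gb in auto)
  define F where "F x = f 0 x + (\<Sum>k. g k x)" for x
  have ul: "uniform_limit UNIV (\<lambda>n x. \<Sum>i<n. g i x) (\<lambda>x. \<Sum>i. g i x) sequentially"
    by (rule Weierstrass_m_test[OF gb sM])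
  have "continuous_on UNIV (\<lambda>x. \<Sum>i. g i x)"
    by (rule uniform_limit_theorem[OF _ ul])
       (auto intro!: always_eventually continuous_on_sum continuous_on_diff fc simp: g_def)
  then have Fc: "continuous_on UNIV F" unfolding F_def by (intro continuous_on_add fc)
  define T where "T k = 4 * L * \<mu>^k / (1 - \<mu>)" for k
  have tail: "norm (F x - f k x) \<le> T k" for k x
  proof -
    have "(\<Sum>i. g i x) = (\<Sum>i. g (i+k) x) + (\<Sum>i<k. g i x)"
      by (rule suminf_split_initial_segment[OF sg])
    moreover have "(\<Sum>i<k. g i x) = f k x - f 0 x"
      unfolding g_def by (rule sum_lessThan_telescope)
    ultimately have "F x - f k x = (\<Sum>i. g (i+k) x)" unfolding F_def by (simp add: algebra_simps)
    moreover have "norm (\<Sum>i. g (i+k) x) \<le> (\<Sum>i. (4*L*\<mu>^k) * \<mu>^i)"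
    proof (rule norm_suminf_le)
      show "norm (g (i+k) x) \<le> (4*L*\<mu>^k) * \<mu>^i" for i
        using gb[of "i+k" x] by (simp add: M_def power_add algebra_simps)
      show "summable (\<lambda>i. (4*L*\<mu>^k) * \<mu>^i)"
        by (intro summable_mult summable_geometric) (use mu0 mu1 in auto)
    qed
    moreover have "(\<Sum>i. (4*L*\<mu>^k) * \<mu>^i) = T k"
      using suminf_mult[OF summable_geometric[of \<mu>], of "4*L*\<mu>^k"] suminf_geometric[of \<mu>] mu0 mu1
      by (simp add: T_def)
    ultimately show ?thesis by simp
  qed
  have T0: "T \<longlonglongrightarrow> 0"
  proof -
    have "(\<lambda>k. (4 * L / (1 - \<mu>)) * \<mu>^k) \<longlonglongrightarrow> (4 * L / (1 - \<mu>)) * 0"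
      by (intro tendsto_mult tendsto_const LIMSEQ_power_zero) (use mu0 mu1 in auto)
    moreover have "T = (\<lambda>k. (4 * L / (1 - \<mu>)) * \<mu>^k)" by (auto simp: T_def fun_eq_iff)
    ultimately show ?thesis by simp
  qed
  have grid: "f k (real_of_int i / 2 ^ k) = P k i" for k i
    by (simp add: f_def)
  have "(\<lambda>k. SUP i. ereal (infnorm (F (real_of_int i / 2 ^ k) - P k i))) \<longlonglongrightarrow> 0"
  proof (rule tendsto_sandwich[of "\<lambda>_. 0" _ _ "\<lambda>k. ereal (T k)"])
    show "\<forall>\<^sub>F k in sequentially. 0 \<le> (SUP i. ereal (infnorm (F (real_of_int i / 2 ^ k) - P k i)))"
      by (intro always_eventually allI SUP_upper2[of 0]) (auto simp: infnorm_pos_le)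
    show "\<forall>\<^sub>F k in sequentially. (SUP i. ereal (infnorm (F (real_of_int i / 2 ^ k) - P k i))) \<le> ereal (T k)"
    proof (intro always_eventually allI SUP_least)
      fix k i
      have "infnorm (F (real_of_int i / 2 ^ k) - P k i) \<le> norm (F (real_of_int i / 2 ^ k) - f k (real_of_int i / 2 ^ k))"
        using infnorm_le_norm grid by metis
      also have "\<dots> \<le> T k" by (rule tail)
      finally show "ereal (infnorm (F (real_of_int i / 2 ^ k) - P k i)) \<le> ereal (T k)" by simp
    qed
    show "(\<lambda>_. 0::ereal) \<longlonglongrightarrow> 0" by simp
    show "(\<lambda>k. ereal (T k)) \<longlonglongrightarrow> 0" using T0 by (simp add: zero_ereal_def)
  qed
  then show ?thesis using Fc by blast
qed

end
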